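(* Let $n\ge 3$, $s,t\in\{-1,1\}^{n}$ with $s\neq t$ and $\sharp_{n}(s)=\sharp_{n}(t)$, and let $(\beta_{1},\beta_{2})\in(0,1)^2$ with $\beta_{1}+\beta_{2}>1$ satisfy \[ \sum_{k=1}^{n}\Big(s_{k}\beta_{1}^{\sharp_{k}(s)}\beta_{2}^{\tilde\sharp_{k}(s)}-t_{k}\beta_{1}^{\sharp_{k}(t)}\beta_{2}^{\tilde\sharp_{k}(t)}\Big)=0 .\] Then there is a $p\in(0,1)$ such that $\widehat{SD}^{p}_{\beta_{1},\beta_{2}}<1$ and $SD^{p}_{\beta_{1},\beta_{2}}>1$.
   Context: $SD^{p}_{\beta_{1},\beta_{2}}=\frac{-p\log p-(1-p)\log(1-p)}{-p\log\beta_{1}-(1-p)\log\beta_{2}}$. For $r\in\{-1,1\}^{n}$ and $1\le k\le n$, $\sharp_{k}(r)$ is the number of entries of $(r_1,\dots,r_k)$ equal to $1$ and $\tilde\sharp_{k}(r)=k-\sharp_{k}(r)$. Put $w_r=p^{\sharp_{n}(r)}(1-p)^{\tilde\sharp_{n}(r)}$, $p_{s,t}=w_s+w_t$, $\rho_r=\beta_{1}^{\sharp_{n}(r)}\beta_{2}^{\tilde\sharp_{n}(r)}$, and \[ \widehat{SD}^{p}_{\beta_{1},\beta_{2}}=\frac{-\sum_{r\in\{-1,1\}^{n}\setminus\{s,t\}}w_r\log w_r-p_{s,t}\log p_{s,t}}{-\sum_{r\in\{-1,1\}^{n}\setminus\{s,t\}}w_r\log \rho_r-p_{s,t}\log\rho_s}.\]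 *)

theory Defs
  imports "HOL-Analysis.Analysis" "HOL-Library.FuncSet"
begin

definition cube :: "nat \<Rightarrow> (nat \<Rightarrow> int) set" where
  "cube n = PiE {1..n} (\<lambda>_. {-1, 1})"

definition cnt :: "nat \<Rightarrow> (nat \<Rightarrow> int) \<Rightarrow> nat" where
  "cnt k r = card {i \<in> {1..k}. r i = 1}"

definition cnt' :: "nat \<Rightarrow> (nat \<Rightarrow> int) \<Rightarrow> nat" where
  "cnt' k r = k - cnt k r"

definition SD :: "real \<Rightarrow> real \<Rightarrow> real \<Rightarrow> real" where
  "SD p b1 b2 = (- p * ln p - (1 - p) * ln (1 - p)) / (- p * ln b1 - (1 - p) * ln b2)"

definition wgt :: "nat \<Rightarrow> real \<Rightarrow> (nat \<Rightarrow> int) \<Rightarrow> real" where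
  "wgt n p r = p ^ cnt n r * (1 - p) ^ cnt' n r"

definition rho :: "nat \<Rightarrow> real \<Rightarrow> real \<Rightarrow> (nat \<Rightarrow> int) \<Rightarrow> real" where
  "rho n b1 b2 r = b1 ^ cnt n r * b2 ^ cnt' n r"

definition SDhat :: "nat \<Rightarrow> (nat \<Rightarrow> int) \<Rightarrow> (nat \<Rightarrow> int) \<Rightarrow> real \<Rightarrow> real \<Rightarrow> real \<Rightarrow> real" where
  "SDhat n s t p b1 b2 =
    (let pst = wgt n p s + wgt n p t in
     (- (\<Sum>r\<in>cube n - {s, t}. wgt n p r * ln (wgt n p r)) - pst * ln pst) /
     (- (\<Sum>r\<in>cube n - {s, t}. wgt n p r * ln (rho n b1 b2 r)) - pst * ln (rho n b1 b2 s)))"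

end

theory Submission
  imports Defs "HOL-Real_Asymp.Real_Asymp"
begin

lemma cnt_le: "cnt n r \<le> n"
  unfolding cnt_def by (rule order_trans[OF card_mono[of "{1..n}"]]) auto

lemma wgt_prod:
  fixes p :: real
  shows "wgt n p r = (\<Prod>i\<in>{1..n}. if r i = 1 then p else 1 - p)"
proof -
  have c: "card ({1..n} \<inter> - {i. r i = 1}) = n - cnt n r"
  proof -
    have "{1..n} \<inter> - {i. r i = 1} = {1..n} - {i \<in> {1..n}. r i = 1}" by auto
    moreover have "card ({1..n} - {i \<in> {1..n}. r i = 1}) = card {1..n} - card {i \<in> {1..n}. r i = 1}"
      by (rule card_Diff_subset) auto
    ultimately show ?thesis unfolding cnt_def by simp
  qed
  have "(\<Prod>i\<in>{1..n}. if r i = 1 then p else 1 - p) = p ^ card ({1..n} \<inter> {i. r i = 1}) * (1-p) ^ card ({1..n} \<inter> - {i. r i = 1})"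
    by (simp add: prod.If_cases)
  also have "{1..n} \<inter> {i. r i = 1} = {i \<in> {1..n}. r i = 1}" by auto
  finally show ?thesis unfolding wgt_def cnt'_def c cnt_def by simp
qed

lemma sum_cube_prod:
  fixes f :: "nat \<Rightarrow> int \<Rightarrow> real"
  shows "(\<Sum>r\<in>cube n. \<Prod>i\<in>{1..n}. f i (r i)) = (\<Prod>i\<in>{1..n}. f i (-1) + f i 1)"
proof -
  have "(\<Prod>i\<in>{1..n}. f i (-1) + f i 1) = (\<Prod>i\<in>{1..n}. \<Sum>y\<in>{-1,1}. f i y)" by simp
  also have "\<dots> = (\<Sum>g\<in>PiE {1..n} (\<lambda>_. {-1,1}). \<Prod>x\<in>{1..n}. f x (g x))"
    by (rule prod_sum_PiE) auto
  finally show ?thesis unfolding cube_def by simp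
qed

lemma sum_wgt_ind:
  fixes p :: real
  assumes "i \<in> {1..n}"
  shows "(\<Sum>r\<in>cube n. wgt n p r * (if r i = 1 then 1 else 0)) = p"
proof -
  define F where "F = (\<lambda>j (x::int). if j = i then (if x = 1 then p else 0) else (if x = 1 then p else 1 - p))"
  have "\<And>r. wgt n p r * (if r i = 1 then 1 else 0) = (\<Prod>j\<in>{1..n}. F j (r j))"
  proof -
    fix r :: "nat \<Rightarrow> int"
    have "(\<Prod>j\<in>{1..n}. F j (r j)) = F i (r i) * (\<Prod>j\<in>{1..n}-{i}. F j (r j))"
      using assms by (simp add: prod.remove)
    also have "(\<Prod>j\<in>{1..n}-{i}. F j (r j)) = (\<Prod>j\<in>{1..n}-{i}. if r j = 1 then p else 1 - p)"
      by (rule prod.cong) (auto simp: F_def)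
    also have "wgt n p r = (if r i = 1 then p else 1 - p) * \<dots>"
      unfolding wgt_prod using assms by (simp add: prod.remove)
    ultimately show "wgt n p r * (if r i = 1 then 1 else 0) = (\<Prod>j\<in>{1..n}. F j (r j))"
      by (simp add: F_def)
  qed
  then have "(\<Sum>r\<in>cube n. wgt n p r * (if r i = 1 then 1 else 0)) = (\<Sum>r\<in>cube n. \<Prod>j\<in>{1..n}. F j (r j))"
    by (intro sum.cong) auto
  also have "\<dots> = (\<Prod>j\<in>{1..n}. F j (-1) + F j 1)"
    by (rule sum_cube_prod)
  also have "\<dots> = (\<Prod>j\<in>{1..n}. if j = i then p else 1)"
    by (rule prod.cong) (auto simp: F_def)
  also have "\<dots> = p" using assms by (simp add: prod.delta)
  finally show ?thesis .
qed

lemma sum_wgt: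
  fixes p :: real
  shows "(\<Sum>r\<in>cube n. wgt n p r) = 1"
proof -
  have "(\<Sum>r\<in>cube n. wgt n p r) = (\<Sum>r\<in>cube n. \<Prod>i\<in>{1..n}. (\<lambda>i x. if x = 1 then p else 1 - p) i (r i))"
    unfolding wgt_prod by simp
  also have "\<dots> = (\<Prod>j\<in>{1..n}. (1 - p) + p)"
    by (subst sum_cube_prod) simp
  also have "\<dots> = 1" by simp
  finally show ?thesis .
qed

lemma cnt_sum: "real (cnt n r) = (\<Sum>i\<in>{1..n}. if r i = 1 then 1 else 0)"
proof -
  have "real (cnt n r) = (\<Sum>i\<in>{i \<in> {1..n}. r i = 1}. 1)" unfolding cnt_def by simp
  also have "\<dots> = (\<Sum>i\<in>{1..n}. if r i = 1 then 1 else 0)" by (rule sum.inter_filter) simp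
  finally show ?thesis .
qed

lemma sum_wgt_cnt:
  fixes p :: real
  shows "(\<Sum>r\<in>cube n. wgt n p r * cnt n r) = n * p"
proof -
  have "(\<Sum>r\<in>cube n. wgt n p r * cnt n r) = (\<Sum>r\<in>cube n. \<Sum>i\<in>{1..n}. wgt n p r * (if r i = 1 then 1 else 0))"
    by (simp add: cnt_sum sum_distrib_left)
  also have "\<dots> = (\<Sum>i\<in>{1..n}. \<Sum>r\<in>cube n. wgt n p r * (if r i = 1 then 1 else 0))"
    by (rule sum.swap)
  also have "\<dots> = (\<Sum>i\<in>{1..n}. p)" by (rule sum.cong) (auto simp: sum_wgt_ind)
  finally show ?thesis by simp
qed

lemma sum_wgt_cnt':
  fixes p :: real
  shows "(\<Sum>r\<in>cube n. wgt n p r * cnt' n r) = n * (1 - p)"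
proof -
  have "(\<Sum>r\<in>cube n. wgt n p r * cnt' n r) = (\<Sum>r\<in>cube n. wgt n p r * n - wgt n p r * cnt n r)"
    by (rule sum.cong) (auto simp: cnt'_def of_nat_diff cnt_le algebra_simps)
  also have "\<dots> = n - n * p" by (simp add: sum_subtractf sum_wgt_cnt sum_wgt flip: sum_distrib_right)
  finally show ?thesis by (simp add: algebra_simps)
qed

lemma ent_sum:
  fixes p :: real
  assumes "0 < p" "p < 1"
  shows "- (\<Sum>r\<in>cube n. wgt n p r * ln (wgt n p r)) = n * (- p * ln p - (1 - p) * ln (1 - p))"
proof -
  have "(\<Sum>r\<in>cube n. wgt n p r * ln (wgt n p r)) = (\<Sum>r\<in>cube n. (wgt n p r * cnt n r) * ln p + (wgt n p r * cnt' n r) * ln (1 - p))"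
    using assms by (intro sum.cong) (auto simp: wgt_def ln_mult ln_realpow algebra_simps)
  also have "\<dots> = n * p * ln p + n * (1 - p) * ln (1 - p)"
    by (simp add: sum.distrib sum_wgt_cnt sum_wgt_cnt' flip: sum_distrib_right)
  finally show ?thesis by (simp add: algebra_simps)
qed

lemma cross_sum:
  fixes p b1 b2 :: real
  assumes "0 < b1" "0 < b2"
  shows "- (\<Sum>r\<in>cube n. wgt n p r * ln (rho n b1 b2 r)) = n * (- p * ln b1 - (1 - p) * ln b2)"
proof -
  have "(\<Sum>r\<in>cube n. wgt n p r * ln (rho n b1 b2 r)) = (\<Sum>r\<in>cube n. (wgt n p r * cnt n r) * ln b1 + (wgt n p r * cnt' n r) * ln b2)"
    using assms by (intro sum.cong) (auto simp: rho_def ln_mult ln_realpow algebra_simps)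
  also have "\<dots> = n * p * ln b1 + n * (1 - p) * ln b2"
    by (simp add: sum.distrib sum_wgt_cnt sum_wgt_cnt' flip: sum_distrib_right)
  finally show ?thesis by (simp add: algebra_simps)
qed

lemma finite_cube: "finite (cube n)"
  unfolding cube_def by (rule finite_PiE) auto

lemma SDhat_eq:
  fixes p b1 b2 :: real
  assumes "0 < p" "p < 1" "0 < b1" "0 < b2"
    and "s \<in> cube n" "t \<in> cube n" "s \<noteq> t" "cnt n s = cnt n t"
  shows "SDhat n s t p b1 b2 =
    (n * (- p * ln p - (1 - p) * ln (1 - p)) - 2 * wgt n p s * ln 2) / (n * (- p * ln b1 - (1 - p) * ln b2))"
proof -
  have c': "cnt' n s = cnt' n t" using assms by (simp add: cnt'_def)
  have wst: "wgt n p t = wgt n p s" using assms c' by (simp add: wgt_def)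
  have rst: "rho n b1 b2 t = rho n b1 b2 s" using assms c' by (simp add: rho_def)
  have wpos: "wgt n p s > 0" using assms by (simp add: wgt_def)
  have D: "\<And>f :: (nat \<Rightarrow> int) \<Rightarrow> real. (\<Sum>r\<in>cube n - {s, t}. f r) = (\<Sum>r\<in>cube n. f r) - f s - f t"
  proof -
    fix f :: "(nat \<Rightarrow> int) \<Rightarrow> real"
    have "(\<Sum>r\<in>cube n - {s, t}. f r) = (\<Sum>r\<in>cube n. f r) - (\<Sum>r\<in>{s,t}. f r)"
      using assms by (intro sum_diff finite_cube) auto
    then show "(\<Sum>r\<in>cube n - {s, t}. f r) = (\<Sum>r\<in>cube n. f r) - f s - f t"
      using assms by simp
  qed
  have l2: "ln (wgt n p s + wgt n p s) = ln 2 + ln (wgt n p s)"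
    using wpos by (simp add: ln_mult flip: mult_2)
  have e: "SDhat n s t p b1 b2 = (- ((\<Sum>r\<in>cube n. wgt n p r * ln (wgt n p r)) - wgt n p s * ln (wgt n p s) - wgt n p s * ln (wgt n p s)) - (wgt n p s + wgt n p s) * ln (wgt n p s + wgt n p s)) /
     (- ((\<Sum>r\<in>cube n. wgt n p r * ln (rho n b1 b2 r)) - wgt n p s * ln (rho n b1 b2 s) - wgt n p s * ln (rho n b1 b2 s)) - (wgt n p s + wgt n p s) * ln (rho n b1 b2 s))"
    unfolding SDhat_def Let_def D[of "\<lambda>r. wgt n p r * ln (wgt n p r)"] D[of "\<lambda>r. wgt n p r * ln (rho n b1 b2 r)"] wst rst ..
  show ?thesis
    unfolding e
    using ent_sum[OF assms(1,2), of n] cross_sum[OF assms(3,4), of n p] l2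
    by (simp add: algebra_simps)
qed

lemma H_lim: "((\<lambda>p::real. - p * ln p - (1 - p) * ln (1 - p)) \<longlongrightarrow> 0) (at_right 0)"
  by real_asymp

theorem proposition2p2:
  fixes n :: nat and s t :: "nat \<Rightarrow> int" and b1 b2 :: real
  assumes "n \<ge> 3"
    and "s \<in> cube n" and "t \<in> cube n" and "s \<noteq> t"
    and "cnt n s = cnt n t"
    and "0 < b1" and "b1 < 1" and "0 < b2" and "b2 < 1" and "b1 + b2 > 1"
    and "(\<Sum>k=1..n. of_int (s k) * b1 ^ cnt k s * b2 ^ cnt' k s
                    - of_int (t k) * b1 ^ cnt k t * b2 ^ cnt' k t) = 0"
  shows "\<exists>p::real. 0 < p \<and> p < 1 \<and> SDhat n s t p b1 b2 < 1 \<and> SD p b1 b2 > 1"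
proof -
  define H where "H = (\<lambda>p::real. - p * ln p - (1 - p) * ln (1 - p))"
  define D where "D = (\<lambda>p::real. - p * ln b1 - (1 - p) * ln b2)"
  define f where "f = (\<lambda>p. H p - D p)"
  define ps where "ps = b1 / (b1 + b2)"
  define m where "m = min (- ln b1) (- ln b2)"
  have m: "m > 0" using assms by (simp add: m_def)
  have ps: "0 < ps" "ps < 1" using assms by (auto simp: ps_def field_simps)
  have ps1: "1 - ps = b2 / (b1 + b2)" using assms by (simp add: ps_def field_simps)
  have "f ps = ln (b1 + b2)"
  proof -
    have A: "ln b1 = ln ps + ln (b1 + b2)" using assms by (simp add: ps_def ln_div)
    have B: "ln b2 = ln (1 - ps) + ln (b1 + b2)" using assms by (simp add: ps1 ln_div)
    show ?thesis unfolding f_def H_def D_def A B by (simp add: algebra_simps)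
  qed
  then have fps: "f ps > 0" using assms by simp
  have Dge: "D p \<ge> m" if "0 \<le> p" "p \<le> 1" for p
  proof -
    have "p * m + (1 - p) * m \<le> p * (- ln b1) + (1 - p) * (- ln b2)"
      using that by (intro add_mono mult_left_mono) (auto simp: m_def)
    then show ?thesis by (simp add: D_def algebra_simps)
  qed
  have "eventually (\<lambda>p. H p < m) (at_right 0)"
    using order_tendstoD(2)[OF H_lim m] by (simp add: H_def)
  then obtain b where b: "b > 0" "\<And>y. y > 0 \<Longrightarrow> y < b \<Longrightarrow> H y < m"
    unfolding eventually_at_right_field by blast
  define e where "e = min (b / 2) (ps / 2)"
  have e: "0 < e" "e < ps" "e < b" using b ps by (auto simp: e_def)
  have fe: "f e < 0" using b(2)[OF e(1) e(3)] Dge[of e] e ps by (simp add: f_def)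
  define k where "k = cnt n s"
  define k' where "k' = cnt' n s"
  define mw where "mw = e ^ k * (1 - ps) ^ k'"
  have mw: "mw > 0" using e ps by (simp add: mw_def)
  have wge: "wgt n p s \<ge> mw" if "e \<le> p" "p \<le> ps" for p
    unfolding wgt_def mw_def k_def[symmetric] k'_def[symmetric]
    using that e ps by (intro mult_mono power_mono) auto
  have n0: "real n > 0" using assms by simp
  define Q where "Q = 2 * mw * ln 2 / n"
  define c where "c = min (f ps) Q / 2"
  have q: "Q > 0" using mw n0 by (simp add: Q_def)
  have c: "0 < c" "c < f ps" "c < 2 * mw * ln 2 / n"
    using fps q unfolding c_def Q_def[symmetric] by (auto simp: min_def)
  have cont: "continuous_on {e..ps} f"
    unfolding f_def H_def D_def using e ps
    by (auto intro!: continuous_intros)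
  obtain x where x: "e \<le> x" "x \<le> ps" "f x = c"
    using IVT'[of f e c ps, OF _ _ _ cont] fe c e by auto
  have x01: "0 < x" "x < 1" using x e ps by auto
  have Dx: "D x > 0" using Dge[of x] x01 m by simp
  have SDe: "SD x b1 b2 = H x / D x" by (simp add: SD_def H_def D_def)
  have SD1: "SD x b1 b2 > 1"
    unfolding SDe using x(3) c Dx by (simp add: f_def)
  have "n * c < 2 * mw * ln 2" using c n0 by (simp add: field_simps)
  also have "\<dots> \<le> 2 * wgt n x s * ln 2" using wge[OF x(1,2)] by simp
  finally have "n * H x - 2 * wgt n x s * ln 2 < n * D x"
    using x(3) by (simp add: f_def algebra_simps)
  moreover have "SDhat n s t x b1 b2 = (n * H x - 2 * wgt n x s * ln 2) / (n * D x)"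
    using SDhat_eq[OF x01 assms(6,8,2,3,4,5)] by (simp add: H_def D_def)
  moreover have "n * D x > 0" using Dx n0 by simp
  ultimately have SDh: "SDhat n s t x b1 b2 < 1"
    by (simp add: divide_less_eq)
  show ?thesis using x01 SD1 SDh by blast
qed

end
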